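(* Let $r,d,d_1\in\mathbb{N}$, $s_i\in\mathbb{N}$ for $i\in[r]$. Let $\mathcal{A}=\{\mathbf{a}^1,\dots,\mathbf{a}^r\}\subseteq\mathbb{Z}^d$ be linearly independent with some $\overline{\omega}\in\mathbb{Q}^d$ satisfying $\overline{\omega}\cdot\mathbf{a}^i=1$ for all $i$, and let $\mathcal{B}=\{\mathbf{b}^i_j:i\in[r],j\in[s_i]\}\subseteq\mathbb{Z}^{d_1}$ be a point configuration with a linear map $\pi_1:\mathbb{Z}^{d_1}\to\mathbb{Z}^d$ such that $\pi_1(\mathbf{b}^i_j)=\mathbf{a}^i$ for all $i,j$. Let $w$ be positive weights on $\mathcal{B}$ such that $(\mathcal{B},w)$ has rational linear precision, with blending functions $\{\beta^i_j\}$ satisfying the definition of rational linear precision, and let $P=\operatorname{conv}(\mathcal{B})$. For $i\in[r]$ let $P^i=\operatorname{conv}\{\mathbf{b}^i_j: j\in[s_i]\}$. Then for all $\mathbf{p}\in P^i$, \[\sum_{j\in[s_i]}\beta^i_j(\mathbf{p})=1.\]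
   Context: Scaled projective toric variety: for a finite point configuration $\mathcal{S}\subseteq\mathbb{Z}^n$ with positive weights $w=(w_{\mathbf{s}})$, $X_{\mathcal{S},w}$ is the Zariski closure of the image of $(\mathbb{C}^* )^n\to\mathbb{P}^{|\mathcal{S}|-1}$, $\mathbf{t}\mapsto[w_{\mathbf{s}}\mathbf{t}^{\mathbf{s}}]_{\mathbf{s}\in\mathcal{S}}$ (a row of ones is appended to the matrix of points if the all-ones vector is not in its row span). Rational linear precision: $(\mathcal{S},w)$, with $\Pi=\operatorname{conv}(\mathcal{S})$, has rational linear precision if there are rational functions $\{\hat\beta_{\mathbf{s}}\}_{\mathbf{s}\in\mathcal{S}}$ on $\mathbb{C}^n$ (blending functions) such that (1) $\sum_{\mathbf{s}}\hat\beta_{\mathbf{s}}=1$; (2) $(\hat\beta_{\mathbf{s}})_{\mathbf{s}}:\mathbb{C}^n\dashrightarrow X_{\mathcal{S},w}$ is a rational parametrization of $X_{\mathcal{S},w}$; (3) for every $\mathbf{p}$ in the relative interior of $\Pi$, each $\hat\beta_{\mathbf{s}}(\mathbf{p})$ is defined and a nonnegative real number; (4) $\sum_{\mathbf{s}}\hat\beta_{\mathbf{s}}(\mathbf{p})\,\mathbf{s}=\mathbf{p}$ for all $\mathbf{p}\in\Pi$. *)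

theory Defs
  imports "HOL-Analysis.Analysis"
begin

definition monom_val :: "('v \<Rightarrow> nat) \<Rightarrow> ('v \<Rightarrow> complex) \<Rightarrow> complex" where
  "monom_val e z = (\<Prod>v\<in>{v. e v \<noteq> 0}. z v ^ e v)"

definition is_poly :: "'v set \<Rightarrow> (('v \<Rightarrow> complex) \<Rightarrow> complex) \<Rightarrow> bool" where
  "is_poly V F \<longleftrightarrow> (\<exists>M c. finite M \<and>
      (\<forall>e\<in>M. finite {v. e v \<noteq> 0} \<and> {v. e v \<noteq> 0} \<subseteq> V) \<and>
      (\<forall>z. F z = (\<Sum>e\<in>M. c e * monom_val e z)))"

definition is_hom_poly :: "'v set \<Rightarrow> (('v \<Rightarrow> complex) \<Rightarrow> complex) \<Rightarrow> bool" where
  "is_hom_poly V F \<longleftrightarrow> (\<exists>M c k. finite M \<and>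
      (\<forall>e\<in>M. finite {v. e v \<noteq> 0} \<and> {v. e v \<noteq> 0} \<subseteq> V \<and> (\<Sum>v\<in>{v. e v \<noteq> 0}. e v) = k) \<and>
      (\<forall>z. F z = (\<Sum>e\<in>M. c e * monom_val e z)))"

definition is_vpoly :: "(complex^('n::finite) \<Rightarrow> complex) \<Rightarrow> bool" where
  "is_vpoly F \<longleftrightarrow> is_poly UNIV (\<lambda>z. F (\<chi> l. z l))"

type_synonym ('n) ratfun = "(complex^'n \<Rightarrow> complex) \<times> (complex^'n \<Rightarrow> complex)"

definition is_ratfun :: "('n::finite) ratfun \<Rightarrow> bool" where
  "is_ratfun \<beta> \<longleftrightarrow> is_vpoly (fst \<beta>) \<and> is_vpoly (snd \<beta>) \<and> (\<exists>x. snd \<beta> x \<noteq> 0)"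

definition rf_rep :: "('n::finite) ratfun \<Rightarrow> 'n ratfun \<Rightarrow> bool" where
  "rf_rep \<beta> \<gamma> \<longleftrightarrow> is_vpoly (fst \<gamma>) \<and> is_vpoly (snd \<gamma>) \<and>
      (\<forall>x. fst \<beta> x * snd \<gamma> x = fst \<gamma> x * snd \<beta> x)"

definition rf_defined :: "('n::finite) ratfun \<Rightarrow> complex^'n \<Rightarrow> bool" where
  "rf_defined \<beta> p \<longleftrightarrow> (\<exists>\<gamma>. rf_rep \<beta> \<gamma> \<and> snd \<gamma> p \<noteq> 0)"

definition rf_val :: "('n::finite) ratfun \<Rightarrow> complex^'n \<Rightarrow> complex" where
  "rf_val \<beta> p = (SOME v. \<exists>\<gamma>. rf_rep \<beta> \<gamma> \<and> snd \<gamma> p \<noteq> 0 \<and> v = fst \<gamma> p / snd \<gamma> p)"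

text \<open>Points of projective space with coordinates indexed by J are represented by nonzero
  vectors (on the affine cone), extended by 0 outside J.\<close>
definition proj_closure :: "'k set \<Rightarrow> ('k \<Rightarrow> complex) set \<Rightarrow> ('k \<Rightarrow> complex) set" where
  "proj_closure J A = {z. (\<forall>k. k \<notin> J \<longrightarrow> z k = 0) \<and> (\<exists>k\<in>J. z k \<noteq> 0) \<and>
      (\<forall>F. is_hom_poly J F \<and> (\<forall>a\<in>A. F a = 0) \<longrightarrow> F z = 0)}"

definition toric_image :: "'k set \<Rightarrow> ('k \<Rightarrow> int^('n::finite)) \<Rightarrow> ('k \<Rightarrow> real) \<Rightarrow> ('k \<Rightarrow> complex) set" where
  "toric_image J pt w = {(\<lambda>k. if k \<in> J then complex_of_real (w k) * (\<Prod>l\<in>UNIV. (t$l) powi (pt k $ l)) else 0)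
      | t :: complex^'n. \<forall>l. t$l \<noteq> 0}"

definition toric_var :: "'k set \<Rightarrow> ('k \<Rightarrow> int^('n::finite)) \<Rightarrow> ('k \<Rightarrow> real) \<Rightarrow> ('k \<Rightarrow> complex) set" where
  "toric_var J pt w = proj_closure J (toric_image J pt w)"

definition cvec :: "real^('n::finite) \<Rightarrow> complex^'n" where
  "cvec p = (\<chi> l. complex_of_real (p$l))"

definition rvec :: "int^('n::finite) \<Rightarrow> real^'n" where
  "rvec b = (\<chi> l. real_of_int (b$l))"

definition blending_functions ::
  "'k set \<Rightarrow> ('k \<Rightarrow> int^('n::finite)) \<Rightarrow> ('k \<Rightarrow> real) \<Rightarrow> ('k \<Rightarrow> ('n::finite) ratfun) \<Rightarrow> bool" where
  "blending_functions J pt w \<beta> \<longleftrightarrow>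
     (\<forall>k\<in>J. is_ratfun (\<beta> k)) \<and>
     \<comment> \<open>(1) the blending functions sum to 1\<close>
     (\<forall>x. (\<forall>k\<in>J. snd (\<beta> k) x \<noteq> 0) \<longrightarrow> (\<Sum>k\<in>J. fst (\<beta> k) x / snd (\<beta> k) x) = 1) \<and>
     \<comment> \<open>(2) beta is a rational parametrization of the toric variety (dominant onto it)\<close>
     proj_closure J {(\<lambda>k. if k \<in> J then fst (\<beta> k) x / snd (\<beta> k) x else 0) | x.
                       \<forall>k\<in>J. snd (\<beta> k) x \<noteq> 0}
       = toric_var J pt w \<and>
     \<comment> \<open>(3) defined and nonnegative real on the relative interior\<close>
     (\<forall>p\<in>rel_interior (convex hull (rvec ` pt ` J)). \<forall>k\<in>J.
         rf_defined (\<beta> k) (cvec p) \<and> rf_val (\<beta> k) (cvec p) \<in> \<real> \<and> 0 \<le> Re (rf_val (\<beta> k) (cvec p))) \<and>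
     \<comment> \<open>(4) linear precision on the whole polytope\<close>
     (\<forall>p\<in>convex hull (rvec ` pt ` J).
         (\<forall>k\<in>J. rf_defined (\<beta> k) (cvec p)) \<and>
         (\<forall>l. (\<Sum>k\<in>J. rf_val (\<beta> k) (cvec p) * of_int (pt k $ l)) = complex_of_real (p$l)))"

definition has_rational_linear_precision ::
  "'k set \<Rightarrow> ('k \<Rightarrow> int^('n::finite)) \<Rightarrow> ('k \<Rightarrow> real) \<Rightarrow> bool" where
  "has_rational_linear_precision J pt w \<longleftrightarrow> (\<exists>\<beta>. blending_functions J pt w \<beta>)"

end

theory Submission
  imports Defs
begin

lemma indep_coeff:
  fixes V :: "nat \<Rightarrow> real^'e"
  assumes inj: "inj_on V {..<r}" and ind: "independent (V ` {..<r})"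
    and sum0: "(\<Sum>i<r. x i *\<^sub>R V i) = 0" and i: "i < r"
  shows "x i = 0"
proof -
  define u where "u v = x (the_inv_into {..<r} V v)" for v
  have "(\<Sum>v\<in>V ` {..<r}. u v *\<^sub>R v) = (\<Sum>i<r. u (V i) *\<^sub>R V i)"
    by (rule sum.reindex[OF inj, unfolded comp_def])
  also have "\<dots> = (\<Sum>i<r. x i *\<^sub>R V i)"
    using inj by (intro sum.cong) (auto simp: u_def the_inv_into_f_f)
  finally have "(\<Sum>v\<in>V ` {..<r}. u v *\<^sub>R v) = 0" using sum0 by simp
  then have "u (V i) = 0"
    using ind i unfolding dependent_finite[OF finite_imageI[OF finite_lessThan]] by blast
  then show ?thesis using inj i by (simp add: u_def the_inv_into_f_f)
qed


theorem lemma3p4: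
  fixes r :: nat and s :: "nat \<Rightarrow> nat"
    and a :: "nat \<Rightarrow> int^'d"
    and \<omega> :: "real^'d"
    and b :: "nat \<Rightarrow> nat \<Rightarrow> int^'e"
    and \<pi>1 :: "int^'e^'d"
    and w :: "nat \<times> nat \<Rightarrow> real"
    and \<beta> :: "nat \<times> nat \<Rightarrow> 'e ratfun"
  defines "J \<equiv> {(i, j). i < r \<and> j < s i}"
  assumes A_distinct: "inj_on (\<lambda>i. rvec (a i)) {..<r}"
    and A_indep: "independent ((\<lambda>i. rvec (a i)) ` {..<r})"
    and omega_rat: "\<forall>l. \<omega> $ l \<in> \<rat>"
    and omega: "\<forall>i<r. \<omega> \<bullet> rvec (a i) = 1"
    and B_distinct: "inj_on (\<lambda>(i, j). b i j) J"
    and proj: "\<forall>i<r. \<forall>j<s i. \<pi>1 *v b i j = a i"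
    and w_pos: "\<forall>k\<in>J. w k > 0"
    and rlp: "has_rational_linear_precision J (\<lambda>(i, j). b i j) w"
    and blend: "blending_functions J (\<lambda>(i, j). b i j) w \<beta>"
  shows "\<forall>i<r. \<forall>p\<in>convex hull {rvec (b i j) | j. j < s i}.
           (\<Sum>j<s i. rf_val (\<beta> (i, j)) (cvec p)) = 1"
  proof (intro allI impI ballI)
  fix i p
  assume i: "i < r" and p: "p \<in> convex hull {rvec (b i j) | j. j < s i}"
  let ?pt = "(\<lambda>(i, j). b i j) :: nat \<times> nat \<Rightarrow> int^'e"
  define g where "g k = rf_val (\<beta> k) (cvec p)" for k
  have Jsig: "J = Sigma {..<r} (\<lambda>i. {..<s i})" unfolding J_def by auto
  have sub: "{rvec (b i j) | j. j < s i} \<subseteq> rvec ` ?pt ` J"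
    using i unfolding J_def by (auto simp: image_iff)
  have pP: "p \<in> convex hull (rvec ` ?pt ` J)"
    using p hull_mono[OF sub] by blast
  have lp: "\<forall>l. (\<Sum>k\<in>J. g k * of_int (?pt k $ l)) = complex_of_real (p$l)"
    using conjunct2[OF bspec[OF conjunct2[OF conjunct2[OF conjunct2[OF conjunct2[OF blend[unfolded blending_functions_def]]]]] pP]]
    unfolding g_def by simp
  have key: "(\<Sum>k\<in>J. g k * of_int (a (fst k) $ m)) = of_int (a i $ m)" for m
  proof -
    define v :: "real^'e" where "v = (\<chi> l. real_of_int (\<pi>1$m$l))"
    have hyp: "{rvec (b i j) | j. j < s i} \<subseteq> {x. inner v x = real_of_int (a i $ m)}"
    proof
      fix x assume "x \<in> {rvec (b i j) | j. j < s i}"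
      then obtain j where j: "j < s i" "x = rvec (b i j)" by auto
      have "(\<pi>1 *v b i j) $ m = a i $ m" using proj i j by simp
      then have "(\<Sum>l\<in>UNIV. \<pi>1$m$l * b i j $ l) = a i $ m"
        by (simp add: matrix_vector_mult_def)
      then have "real_of_int (\<Sum>l\<in>UNIV. \<pi>1$m$l * b i j $ l) = real_of_int (a i $ m)" by simp
      then show "x \<in> {x. inner v x = real_of_int (a i $ m)}"
        using j by (simp add: inner_vec_def v_def rvec_def)
    qed
    have "convex hull {rvec (b i j) | j. j < s i} \<subseteq> {x. inner v x = real_of_int (a i $ m)}"
      by (rule hull_minimal[OF hyp], rule convex_hyperplane)
    then have "p \<in> {x. inner v x = real_of_int (a i $ m)}"
      using p by blast
    then have pv: "(\<Sum>l\<in>UNIV. real_of_int (\<pi>1$m$l) * p $ l) = real_of_int (a i $ m)"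
      by (simp add: inner_vec_def v_def)
    have "(\<Sum>k\<in>J. g k * of_int (a (fst k) $ m))
        = (\<Sum>k\<in>J. g k * of_int (\<Sum>l\<in>UNIV. \<pi>1$m$l * ?pt k $ l))"
    proof (intro sum.cong refl)
      fix k assume "k \<in> J"
      then obtain i' j' where k: "k = (i', j')" "i' < r" "j' < s i'" unfolding J_def by auto
      have "(\<pi>1 *v b i' j') $ m = a i' $ m" using proj k by simp
      then show "g k * of_int (a (fst k) $ m) = g k * of_int (\<Sum>l\<in>UNIV. \<pi>1$m$l * ?pt k $ l)"
        using k by (simp add: matrix_vector_mult_def)
    qed
    also have "\<dots> = (\<Sum>l\<in>UNIV. of_int (\<pi>1$m$l) * (\<Sum>k\<in>J. g k * of_int (?pt k $ l)))"
      apply (simp only: of_int_sum of_int_mult sum_distrib_left sum_distrib_right)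
      apply (subst sum.swap)
      apply (simp only: mult_ac)
      done
    also have "\<dots> = (\<Sum>l\<in>UNIV. of_int (\<pi>1$m$l) * complex_of_real (p $ l))"
      using lp by simp
    also have "\<dots> = complex_of_real (\<Sum>l\<in>UNIV. real_of_int (\<pi>1$m$l) * p $ l)"
      by simp
    also have "\<dots> = of_int (a i $ m)" using pv by simp
    finally show ?thesis .
  qed
  define c where "c i' = (\<Sum>j<s i'. g (i', j))" for i'
  have key2: "(\<Sum>i'<r. c i' * of_int (a i' $ m)) = of_int (a i $ m)" for m
  proof -
    have "(\<Sum>i'<r. c i' * of_int (a i' $ m)) = (\<Sum>k\<in>J. g k * of_int (a (fst k) $ m))"
      unfolding Jsig c_def by (simp add: sum.Sigma sum_distrib_right case_prod_beta)
    then show ?thesis using key by simp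
  qed
  let ?V = "\<lambda>i. rvec (a i)"
  have delta: "(\<Sum>i'<r. (if i' = i then 1 else 0) *\<^sub>R ?V i') = ?V i"
    using i by (subst sum.cong[OF refl, of _ _ "\<lambda>i'. if i' = i then ?V i' else 0"]) auto
  have re: "(\<Sum>i'<r. (Re (c i') - (if i' = i then 1 else 0)) *\<^sub>R ?V i') = 0"
  proof -
    have "(\<Sum>i'<r. Re (c i') *\<^sub>R ?V i') = ?V i"
    proof (rule vec_eq_iff[THEN iffD2, rule_format])
      fix m
      have "Re (\<Sum>i'<r. c i' * of_int (a i' $ m)) = Re (of_int (a i $ m))" using key2 by simp
      then show "(\<Sum>i'<r. Re (c i') *\<^sub>R ?V i') $ m = ?V i $ m"
        by (simp add: rvec_def Re_sum)
    qed
    then show ?thesis using delta by (simp add: scaleR_diff_left sum_subtractf)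
  qed
  have im: "(\<Sum>i'<r. Im (c i') *\<^sub>R ?V i') = 0"
  proof (rule vec_eq_iff[THEN iffD2, rule_format])
    fix m
    have "Im (\<Sum>i'<r. c i' * of_int (a i' $ m)) = Im (of_int (a i $ m))" using key2 by simp
    then show "(\<Sum>i'<r. Im (c i') *\<^sub>R ?V i') $ m = 0 $ m"
      by (simp add: rvec_def Im_sum)
  qed
  have "Re (c i) - 1 = 0"
    using indep_coeff[OF A_distinct A_indep re i] by simp
  moreover have "Im (c i) = 0"
    using indep_coeff[OF A_distinct A_indep im i] .
  ultimately have "c i = 1" by (simp add: complex_eq_iff)
  then show "(\<Sum>j<s i. rf_val (\<beta> (i, j)) (cvec p)) = 1"
    by (simp add: c_def g_def)
qed

end
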